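(* Let $k\ge 2$ and let $I$ be a purified instance relative to $C_k$ such that the instance graph $F_{C_k}(I)$ is strongly connected. If $F_{C_k}(I)$ contains a directed simple cycle of length greater than $k$, then $\mathcal M_{C_k}(I)=\{\emptyset\}$ (in particular $I\not\vDash C_k$). Otherwise $\mathcal M_{C_k}(I)=\{\{(a_1,\dots,a_k)\}: (a_1,\dots,a_k)\in C_k^f(I)\}$, i.e. every frugal repair yields exactly one answer tuple (one $k$-cycle $a_1\to a_2\to\dots\to a_k\to a_1$ of $F_{C_k}(I)$), and every such $k$-cycle is the unique answer of some frugal repair.
   Context: For $k\ge2$, $C_k=R_1(\underline{x_1},x_2),\dots,R_k(\underline{x_k},x_1)$ with the first attribute of each atom the key; relations may be of consistent or inconsistent type. A repair of $I$ is a maximal subset of $I$ satisfying all key constraints (one tuple per key-group); $I\vDash C_k$ means $C_k(r)$ holds for every repair. $C_k^f(r)$ is the set of tuples $(a_1,\dots,a_k)$ with $R_i(a_i,a_{i+1})\in r$ for all $i$ (indices mod $k$). A repair $r$ is frugal if no repair $r'$ has $C_k^f(r')\subsetneq C_k^f(r)$, and $\mathcal M_{C_k}(I)=\{C_k^f(r): r$ frugal$\}$. $I$ is purified relative to $C_k$ if every tuple of each $R_i^I$ occurs in some tuple of $C_k^f(I)$. The instance graph $F_{C_k}(I)$ has the constants of $I$ as vertices and an edge $(a,b)$ for each tuple $R_i(a,b)\in I$; constants in positions of distinct variables are assumed distinct. *)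

theory Defs
  imports Main
begin

(* An instance for C_k = R_0(x_0,x_1),...,R_{k-1}(x_{k-1},x_0) is a family
   I :: nat => ('a * 'a) set, where I i (for i < k) is the relation R_i;
   the first component of each pair is the key. Indices are taken mod k. *)

definition key_cons :: "('a \<times> 'a) set \<Rightarrow> bool" where
  "key_cons R \<longleftrightarrow> (\<forall>a b c. (a, b) \<in> R \<and> (a, c) \<in> R \<longrightarrow> b = c)"

definition repair :: "nat \<Rightarrow> (nat \<Rightarrow> ('a \<times> 'a) set) \<Rightarrow> (nat \<Rightarrow> ('a \<times> 'a) set) \<Rightarrow> bool" where
  "repair k I r \<longleftrightarrow>
     (\<forall>i<k. r i \<subseteq> I i \<and> key_cons (r i)) \<and>
     (\<forall>r'. (\<forall>i<k. r i \<subseteq> r' i \<and> r' i \<subseteq> I i \<and> key_cons (r' i)) \<longrightarrow> (\<forall>i<k. r' i = r i))"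

definition Cf :: "nat \<Rightarrow> (nat \<Rightarrow> ('a \<times> 'a) set) \<Rightarrow> 'a list set" where
  "Cf k r = {as. length as = k \<and> (\<forall>i<k. (as ! i, as ! ((i + 1) mod k)) \<in> r i)}"

definition frugal :: "nat \<Rightarrow> (nat \<Rightarrow> ('a \<times> 'a) set) \<Rightarrow> (nat \<Rightarrow> ('a \<times> 'a) set) \<Rightarrow> bool" where
  "frugal k I r \<longleftrightarrow> repair k I r \<and> \<not> (\<exists>r'. repair k I r' \<and> Cf k r' \<subset> Cf k r)"

definition MC :: "nat \<Rightarrow> (nat \<Rightarrow> ('a \<times> 'a) set) \<Rightarrow> 'a list set set" where
  "MC k I = {Cf k r | r. frugal k I r}"

definition entails :: "nat \<Rightarrow> (nat \<Rightarrow> ('a \<times> 'a) set) \<Rightarrow> bool" where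
  "entails k I \<longleftrightarrow> (\<forall>r. repair k I r \<longrightarrow> Cf k r \<noteq> {})"

definition purified :: "nat \<Rightarrow> (nat \<Rightarrow> ('a \<times> 'a) set) \<Rightarrow> bool" where
  "purified k I \<longleftrightarrow>
     (\<forall>i<k. \<forall>a b. (a, b) \<in> I i \<longrightarrow>
        (\<exists>as \<in> Cf k I. as ! i = a \<and> as ! ((i + 1) mod k) = b))"

(* constants occurring in positions of variable x_i *)
definition var_consts :: "nat \<Rightarrow> (nat \<Rightarrow> ('a \<times> 'a) set) \<Rightarrow> nat \<Rightarrow> 'a set" where
  "var_consts k I i = Domain (I i) \<union> Range (I ((i + k - 1) mod k))"

definition distinct_positions :: "nat \<Rightarrow> (nat \<Rightarrow> ('a \<times> 'a) set) \<Rightarrow> bool" where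
  "distinct_positions k I \<longleftrightarrow>
     (\<forall>i<k. \<forall>j<k. i \<noteq> j \<longrightarrow> var_consts k I i \<inter> var_consts k I j = {})"

definition inst_edges :: "nat \<Rightarrow> (nat \<Rightarrow> ('a \<times> 'a) set) \<Rightarrow> ('a \<times> 'a) set" where
  "inst_edges k I = (\<Union>i<k. I i)"

definition inst_vertices :: "nat \<Rightarrow> (nat \<Rightarrow> ('a \<times> 'a) set) \<Rightarrow> 'a set" where
  "inst_vertices k I = Domain (inst_edges k I) \<union> Range (inst_edges k I)"

definition strongly_connected :: "'a set \<Rightarrow> ('a \<times> 'a) set \<Rightarrow> bool" where
  "strongly_connected V E \<longleftrightarrow> V \<noteq> {} \<and> (\<forall>u\<in>V. \<forall>v\<in>V. (u, v) \<in> E\<^sup>*)"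

definition simple_cycle :: "('a \<times> 'a) set \<Rightarrow> 'a list \<Rightarrow> bool" where
  "simple_cycle E vs \<longleftrightarrow> vs \<noteq> [] \<and> distinct vs \<and>
     (\<forall>j<length vs. (vs ! j, vs ! ((j + 1) mod length vs)) \<in> E)"

end

theory Submission
  imports Defs
begin


locale ck =
  fixes k :: nat and I :: "nat \<Rightarrow> ('a \<times> 'a) set"
  assumes k2: "k \<ge> 2" and fin: "\<forall>i<k. finite (I i)"
    and dp: "distinct_positions k I" and pur: "purified k I"
    and sc: "strongly_connected (inst_vertices k I) (inst_edges k I)"
begin

abbreviation "E \<equiv> inst_edges k I"
abbreviation "V \<equiv> inst_vertices k I"

lemma dom_unique: "i<k \<Longrightarrow> j<k \<Longrightarrow> a \<in> Domain (I i) \<Longrightarrow> a \<in> Domain (I j) \<Longrightarrow> i = j"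
  using dp unfolding distinct_positions_def var_consts_def by blast

lemma range_dom: assumes "i<k" "(a,b) \<in> I i" shows "b \<in> Domain (I (Suc i mod k))"
proof -
  obtain as where as: "as \<in> Cf k I" "as!i = a" "as!(Suc i mod k) = b"
    using pur assms unfolding purified_def by fastforce
  have "Suc i mod k < k" using k2 by simp
  with as(1) have "(as!(Suc i mod k), as!(Suc (Suc i mod k) mod k)) \<in> I (Suc i mod k)"
    unfolding Cf_def by auto
  with as show ?thesis by auto
qed

lemma edge_E: "i<k \<Longrightarrow> (a,b) \<in> I i \<Longrightarrow> (a,b) \<in> E"
  unfolding inst_edges_def by auto

lemma E_cases: "(a,b) \<in> E \<Longrightarrow> \<exists>i<k. (a,b) \<in> I i"
  unfolding inst_edges_def by auto

lemma V_E: "(a,b) \<in> E \<Longrightarrow> a \<in> V \<and> b \<in> V"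
  unfolding inst_vertices_def by auto

lemma V_dom: assumes "v \<in> V" shows "\<exists>i<k. v \<in> Domain (I i)"
proof -
  have "v \<in> Domain E \<or> v \<in> Range E" using assms unfolding inst_vertices_def by auto
  then show ?thesis
  proof
    assume "v \<in> Domain E" then show ?thesis unfolding inst_edges_def by auto
  next
    assume "v \<in> Range E"
    then obtain a i where "i<k" "(a,v) \<in> I i" unfolding inst_edges_def by auto
    then show ?thesis using range_dom[of i a v] k2 by (intro exI[of _ "Suc i mod k"]) auto
  qed
qed

lemma finV: "finite V"
  using fin unfolding inst_vertices_def inst_edges_def
  by (auto intro!: finite_Domain finite_Range)

definition lay :: "'a \<Rightarrow> nat" where "lay v = (THE i. i<k \<and> v \<in> Domain (I i))"

lemma lay_eq: "i<k \<Longrightarrow> v \<in> Domain (I i) \<Longrightarrow> lay v = i"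
  unfolding lay_def by (rule the_equality) (simp, metis dom_unique)

lemma lay_V: "v \<in> V \<Longrightarrow> lay v < k \<and> v \<in> Domain (I (lay v))"
  using V_dom lay_eq by metis

definition rf :: "('a \<Rightarrow> 'a) \<Rightarrow> nat \<Rightarrow> ('a \<times> 'a) set" where
  "rf f i = {(a,b). (a,b) \<in> I i \<and> b = f a}"

lemma rf_repair: assumes fE: "\<forall>v\<in>V. (v, f v) \<in> E" shows "repair k I (rf f)"
  unfolding repair_def
proof (intro conjI)
  show "\<forall>i<k. rf f i \<subseteq> I i \<and> key_cons (rf f i)"
    unfolding rf_def key_cons_def by auto
next
  show "\<forall>r'. (\<forall>i<k. rf f i \<subseteq> r' i \<and> r' i \<subseteq> I i \<and> key_cons (r' i)) \<longrightarrow> (\<forall>i<k. r' i = rf f i)"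
  proof (intro allI impI)
  fix r' i assume H: "\<forall>i<k. rf f i \<subseteq> r' i \<and> r' i \<subseteq> I i \<and> key_cons (r' i)" and i: "i<k"
  show "r' i = rf f i"
  proof
    show "r' i \<subseteq> rf f i"
    proof
      fix x assume x: "x \<in> r' i"
      obtain a b where xab: "x = (a,b)" by fastforce
      have abI: "(a,b) \<in> I i" using H i x xab by auto
      then have "a \<in> V" using V_E edge_E i by blast
      then have "(a, f a) \<in> E" using fE by auto
      then obtain j where j: "j<k" "(a, f a) \<in> I j" using E_cases by blast
      have "j = i" using dom_unique[OF j(1) i] j(2) abI by blast
      then have "(a, f a) \<in> rf f i" using j unfolding rf_def by auto
      then have "(a, f a) \<in> r' i" using H i by auto
      then have "b = f a" using H i x xab unfolding key_cons_def by blast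
      then show "x \<in> rf f i" using abI xab unfolding rf_def by auto
    qed
    show "rf f i \<subseteq> r' i" using H i by auto
  qed
  qed
qed

lemma Cf_rf: "as \<in> Cf k (rf f) \<Longrightarrow> i<k \<Longrightarrow> as!(Suc i mod k) = f (as!i) \<and> (as!i, as!(Suc i mod k)) \<in> I i"
  unfolding Cf_def rf_def by auto

end


context ck begin

definition dist :: "'a set \<Rightarrow> 'a \<Rightarrow> nat" where
  "dist C v = (LEAST m. \<exists>c\<in>C. (v,c) \<in> E ^^ m)"

lemma dist_step: assumes "C \<subseteq> V" "C \<noteq> {}" "v \<in> V" "v \<notin> C"
  shows "\<exists>u. (v,u) \<in> E \<and> dist C u < dist C v"
proof -
  obtain c where c: "c \<in> C" using assms by auto
  then have "(v,c) \<in> E\<^sup>*" using sc assms unfolding strongly_connected_def by blast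
  then obtain m where "(v,c) \<in> E ^^ m" using rtrancl_imp_relpow by blast
  then have ex: "\<exists>m. \<exists>c\<in>C. (v,c) \<in> E ^^ m" using c by blast
  then obtain c' where c': "c' \<in> C" "(v,c') \<in> E ^^ dist C v"
    unfolding dist_def using LeastI_ex[OF ex] by blast
  have "dist C v \<noteq> 0"
  proof
    assume "dist C v = 0" then show False using c' assms(4) by auto
  qed
  then obtain d where d: "dist C v = Suc d" using not0_implies_Suc by blast
  then obtain u where u: "(v,u) \<in> E" "(u,c') \<in> E ^^ d" using c' relpow_Suc_D2 by metis
  have "\<exists>c\<in>C. (u,c) \<in> E ^^ d" using u c' by blast
  then have "dist C u \<le> d" unfolding dist_def by (rule Least_le)
  then show ?thesis using u d by auto
qed

definition cyc_f :: "'a list \<Rightarrow> 'a \<Rightarrow> 'a" where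
  "cyc_f vs v = (if v \<in> set vs then vs ! (Suc (THE j. j < length vs \<and> vs!j = v) mod length vs)
     else (SOME u. (v,u) \<in> E \<and> dist (set vs) u < dist (set vs) v))"

lemma cyc_f_on: assumes "distinct vs" "j < length vs"
  shows "cyc_f vs (vs!j) = vs!(Suc j mod length vs)"
proof -
  have "(THE j'. j' < length vs \<and> vs!j' = vs!j) = j"
    using assms by (intro the_equality) (auto simp: nth_eq_iff_index_eq)
  then show ?thesis using assms unfolding cyc_f_def by auto
qed

lemma sc_V: "simple_cycle E vs \<Longrightarrow> set vs \<subseteq> V"
  unfolding simple_cycle_def by (metis V_E in_set_conv_nth subsetI)

lemma cyc_f_props: assumes sc: "simple_cycle E vs" and v: "v \<in> V"
  shows "(v, cyc_f vs v) \<in> E \<and> (v \<notin> set vs \<longrightarrow> dist (set vs) (cyc_f vs v) < dist (set vs) v)"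
proof (cases "v \<in> set vs")
  case True
  then obtain j where j: "j < length vs" "v = vs!j" by (metis in_set_conv_nth)
  then show ?thesis using sc cyc_f_on[of vs j] unfolding simple_cycle_def by auto
next
  case False
  have "set vs \<subseteq> V" "set vs \<noteq> {}" using sc sc_V unfolding simple_cycle_def by auto
  then have "\<exists>u. (v,u) \<in> E \<and> dist (set vs) u < dist (set vs) v"
    using dist_step v False by blast
  then have "(v, cyc_f vs v) \<in> E \<and> dist (set vs) (cyc_f vs v) < dist (set vs) v"
    unfolding cyc_f_def using False someI_ex[of "\<lambda>u. (v,u) \<in> E \<and> dist (set vs) u < dist (set vs) v"] by auto
  then show ?thesis by auto
qed

lemma cyc_f_E: "simple_cycle E vs \<Longrightarrow> \<forall>v\<in>V. (v, cyc_f vs v) \<in> E"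
  using cyc_f_props by blast

lemma cycle_only: assumes scy: "simple_cycle E vs" and as: "as \<in> Cf k (rf (cyc_f vs))"
  shows "\<forall>i<k. as!i \<in> set vs"
proof -
  let ?f = "cyc_f vs"
  define \<psi> where "\<psi> v = (if v \<in> set vs then 0 else Suc (dist (set vs) v))" for v
  have asV: "as!i \<in> V" if "i<k" for i
    using Cf_rf[OF as that] edge_E[OF that] V_E by blast
  have closed: "?f v \<in> set vs" if "v \<in> set vs" for v
    using that scy cyc_f_on unfolding simple_cycle_def
    by (metis in_set_conv_nth mod_less_divisor nth_mem length_pos_if_in_set)
  let ?S = "(\<lambda>i. \<psi> (as!i)) ` {..<k}"
  have finS: "finite ?S" by auto
  have neS: "?S \<noteq> {}" using k2 by (auto simp: lessThan_empty_iff)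
  obtain i where i: "i<k" "\<psi> (as!i) = Max ?S" using Max_in[OF finS neS] by auto
  have ge: "\<psi> (as!j) \<le> \<psi> (as!i)" if "j<k" for j using i that finS by auto
  have M0: "\<psi> (as!i) = 0"
  proof (rule ccontr)
    assume nz: "\<psi> (as!i) \<noteq> 0"
    then have ni: "as!i \<notin> set vs" unfolding \<psi>_def by auto
    define p where "p = (i + k - 1) mod k"
    have p: "p < k" "Suc p mod k = i" using i k2 unfolding p_def
      by (auto simp: mod_Suc_eq)
    have fi: "as!i = ?f (as!p)" using Cf_rf[OF as p(1)] p by auto
    show False
    proof (cases "as!p \<in> set vs")
      case True then show False using closed fi ni by auto
    next
      case False
      have "dist (set vs) (?f (as!p)) < dist (set vs) (as!p)"
        using cyc_f_props[OF scy asV[OF p(1)]] False by auto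
      then have "\<psi> (as!i) < \<psi> (as!p)" using ni False fi unfolding \<psi>_def by auto
      then show False using ge[OF p(1)] by auto
    qed
  qed
  show ?thesis
  proof (intro allI impI)
    fix j assume "j<k"
    then have "\<psi> (as!j) = 0" using ge M0 by fastforce
    then show "as!j \<in> set vs" unfolding \<psi>_def by (auto split: if_splits)
  qed
qed

lemma cycle_shape: assumes scy: "simple_cycle E vs" and as: "as \<in> Cf k (rf (cyc_f vs))"
  shows "\<exists>j0 < length vs. (\<forall>i<k. as!i = vs!((j0+i) mod length vs)) \<and> (j0 + k) mod length vs = j0"
proof -
  let ?f = "cyc_f vs"
  let ?n = "length vs"
  have dis: "distinct vs" and n0: "?n > 0" using scy unfolding simple_cycle_def by auto
  have "as!0 \<in> set vs" using cycle_only[OF scy as] k2 by auto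
  then obtain j0 where j0: "j0 < ?n" "as!0 = vs!j0" by (metis in_set_conv_nth)
  have all: "i<k \<longrightarrow> as!i = vs!((j0+i) mod ?n)" for i
  proof (induction i)
    case 0 then show ?case using j0 by simp
  next
    case (Suc i)
    show ?case
    proof
      assume si: "Suc i < k"
      then have "as!(Suc i) = ?f (as!i)" using Cf_rf[OF as, of i] by auto
      also have "\<dots> = ?f (vs!((j0+i) mod ?n))" using Suc si by auto
      also have "\<dots> = vs!(Suc ((j0+i) mod ?n) mod ?n)" using cyc_f_on[OF dis] n0 by auto
      also have "\<dots> = vs!((j0 + Suc i) mod ?n)" by (simp add: mod_Suc_eq)
      finally show "as!(Suc i) = vs!((j0 + Suc i) mod ?n)" .
    qed
  qed
  have km: "k - 1 < k" "Suc (k-1) mod k = 0" using k2 by auto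
  have "vs!j0 = as!0" using j0 by simp
  also have "\<dots> = ?f (as!(k-1))" using Cf_rf[OF as km(1)] km(2) by simp
  also have "\<dots> = ?f (vs!((j0 + (k-1)) mod ?n))" using all km by simp
  also have "\<dots> = vs!(Suc ((j0 + (k-1)) mod ?n) mod ?n)" using cyc_f_on[OF dis] n0 by auto
  also have "\<dots> = vs!((j0 + k) mod ?n)" using k2 by (simp add: mod_Suc_eq)
  finally have "vs!j0 = vs!((j0 + k) mod ?n)" .
  then have "(j0 + k) mod ?n = j0" using dis j0 n0 by (simp add: nth_eq_iff_index_eq)
  then show ?thesis using all j0 by blast
qed

end


context ck begin

lemma mod_ne: assumes a: "j0 < (n::nat)" "0 < k'" "k' < n" shows "(j0 + k') mod n \<noteq> j0"
proof (cases "j0 + k' < n")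
  case True then show ?thesis using a by simp
next
  case False
  then have "(j0 + k') mod n = (j0 + k' - n) mod n" using False by (simp add: le_mod_geq)
  also have "\<dots> = j0 + k' - n" using a by simp
  finally show ?thesis using a False by arith
qed

lemma long_empty: assumes scy: "simple_cycle E vs" and len: "length vs > k"
  shows "Cf k (rf (cyc_f vs)) = {}"
proof (rule ccontr)
  assume "Cf k (rf (cyc_f vs)) \<noteq> {}"
  then obtain as where "as \<in> Cf k (rf (cyc_f vs))" by auto
  from cycle_shape[OF scy this] obtain j0 where "j0 < length vs" "(j0 + k) mod length vs = j0" by blast
  then show False using mod_ne[of j0 "length vs" k] len k2 by auto
qed

lemma t_cycle: assumes t: "t \<in> Cf k I" shows "simple_cycle E t"
proof -
  have len: "length t = k" using t unfolding Cf_def by auto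
  have e: "(t!i, t!(Suc i mod k)) \<in> I i" if "i<k" for i using t that unfolding Cf_def by auto
  have "distinct t" unfolding distinct_conv_nth
  proof (intro allI impI)
    fix i j assume "i < length t" "j < length t" "i \<noteq> j"
    then have "t!i \<in> Domain (I i)" "t!j \<in> Domain (I j)" "i<k" "j<k" using e[of i] e[of j] len by auto
    then show "t!i \<noteq> t!j" using dom_unique[of i j] \<open>i \<noteq> j\<close> by metis
  qed
  then show ?thesis unfolding simple_cycle_def using len k2 e edge_E by auto
qed

lemma t_single: assumes t: "t \<in> Cf k I" shows "Cf k (rf (cyc_f t)) = {t}"
proof
  have len: "length t = k" using t unfolding Cf_def by auto
  have e: "(t!i, t!(Suc i mod k)) \<in> I i" if "i<k" for i using t that unfolding Cf_def by auto
  have scy: "simple_cycle E t" using t_cycle[OF t] .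
  have dis: "distinct t" using scy unfolding simple_cycle_def by auto
  show "{t} \<subseteq> Cf k (rf (cyc_f t))"
    using e cyc_f_on[OF dis] len unfolding Cf_def rf_def by auto
  show "Cf k (rf (cyc_f t)) \<subseteq> {t}"
  proof
    fix as assume as: "as \<in> Cf k (rf (cyc_f t))"
    from cycle_shape[OF scy as] obtain j0 where j0: "j0 < k" "\<forall>i<k. as!i = t!((j0+i) mod k)"
      using len by auto
    have "as!0 \<in> Domain (I 0)" using Cf_rf[OF as, of 0] k2 by auto
    moreover have "as!0 = t!j0" using j0 k2 by auto
    ultimately have "j0 = 0" using e[OF j0(1)] dom_unique[of 0 j0] j0 k2 by auto
    then have "\<forall>i<k. as!i = t!i" using j0 by auto
    moreover have "length as = k" using as unfolding Cf_def by auto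
    ultimately show "as \<in> {t}" using len by (auto intro: nth_equalityI)
  qed
qed

lemma repair_total: assumes R: "repair k I r" and i: "i<k" and a: "a \<in> Domain (I i)"
  shows "\<exists>b. (a,b) \<in> r i"
proof (rule ccontr)
  assume nb: "\<not> (\<exists>b. (a,b) \<in> r i)"
  obtain b where ab: "(a,b) \<in> I i" using a by auto
  let ?r' = "r(i := insert (a,b) (r i))"
  have "\<forall>j<k. r j \<subseteq> ?r' j \<and> ?r' j \<subseteq> I j \<and> key_cons (?r' j)"
  proof (intro allI impI conjI)
    fix j assume j: "j<k"
    show "r j \<subseteq> ?r' j" by auto
    show "?r' j \<subseteq> I j" using R ab j unfolding repair_def by (cases "j = i") auto
    show "key_cons (?r' j)"
    proof (cases "j = i")
      case False then show ?thesis using R j unfolding repair_def by auto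
    next
      case True
      have kc: "key_cons (r i)" using R i unfolding repair_def by auto
      show ?thesis unfolding True key_cons_def
      proof (intro allI impI)
        fix x y z assume h: "(x,y) \<in> ?r' i \<and> (x,z) \<in> ?r' i"
        then show "y = z" using kc nb unfolding key_cons_def by auto
      qed
    qed
  qed
  then have "\<forall>j<k. ?r' j = r j" using R unfolding repair_def by blast
  hence "?r' i = r i" using i by blast
  thus False using nb by auto
qed

lemma repair_sub: "repair k I r \<Longrightarrow> i<k \<Longrightarrow> r i \<subseteq> I i"
  unfolding repair_def by auto

lemma Cf_mono: "repair k I r \<Longrightarrow> Cf k r \<subseteq> Cf k I"
  unfolding Cf_def using repair_sub by fastforce

end


context ck begin

lemma nonempty_Cf: assumes noc: "\<not>(\<exists>vs. simple_cycle E vs \<and> length vs > k)" and R: "repair k I r"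
  shows "Cf k r \<noteq> {}"
proof -
  define f where "f v = (SOME b. (v,b) \<in> r (lay v))" for v
  have fstep: "(v, f v) \<in> r (lay v) \<and> lay v < k" if "v \<in> V" for v
  proof -
    have "lay v < k" "v \<in> Domain (I (lay v))" using lay_V[OF that] by auto
    then have "\<exists>b. (v,b) \<in> r (lay v)" using repair_total[OF R] by blast
    then show ?thesis unfolding f_def using someI_ex \<open>lay v < k\<close> by metis
  qed
  have fI: "(v, f v) \<in> I (lay v)" if "v \<in> V" for v using fstep[OF that] repair_sub[OF R] by blast
  have fE: "(v, f v) \<in> E" if "v \<in> V" for v using fI[OF that] fstep[OF that] edge_E by blast
  have fV: "f v \<in> V" if "v \<in> V" for v using fE[OF that] V_E by blast
  have flay: "lay (f v) = Suc (lay v) mod k" if "v \<in> V" for v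
    using range_dom[OF conjunct2[OF fstep[OF that]] fI[OF that]] lay_eq k2 by auto
  obtain v0 where v0: "v0 \<in> V" using sc unfolding strongly_connected_def by auto
  define w where "w n = (f ^^ n) v0" for n
  have wS: "w (Suc n) = f (w n)" for n by (simp add: w_def)
  have wV: "w n \<in> V" for n by (induction n) (auto simp: w_def v0 fV)
  have "\<not> inj_on w {..card V}"
  proof
    assume "inj_on w {..card V}"
    then have "card {..card V} \<le> card V" using card_inj_on_le[of w "{..card V}" V] finV wV by auto
    then show False by simp
  qed
  then obtain a b where ab: "a \<noteq> b" "w a = w b" unfolding inj_on_def by auto
  have ex: "\<exists>n. \<exists>m<n. w m = w n"
  proof (cases "a < b")
    case True then show ?thesis using ab by blast
  next
    case False then have "b < a" using ab by auto
    then show ?thesis using ab by metis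
  qed
  define N where "N = (LEAST n. \<exists>m<n. w m = w n)"
  obtain M where MN: "M < N" "w M = w N" using LeastI_ex[OF ex] unfolding N_def by blast
  have dist_w: "a = b" if "a < N" "b < N" "w a = w b" for a b
  proof (rule ccontr)
    assume "a \<noteq> b"
    then consider "a < b" | "b < a" by linarith
    then show False
    proof cases
      case 1
      then have "\<exists>m<b. w m = w b" using that by blast
      then have "N \<le> b" unfolding N_def by (rule Least_le)
      then show False using that by auto
    next
      case 2
      then have "\<exists>m<a. w m = w a" using that by metis
      then have "N \<le> a" unfolding N_def by (rule Least_le)
      then show False using that by auto
    qed
  qed
  define p where "p = N - M"
  have p0: "p > 0" using MN p_def by auto
  define vs where "vs = map (\<lambda>j. w (M+j)) [0..<p]"
  have lvs: "length vs = p" unfolding vs_def by simp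
  have edge_w: "(w n, w (Suc n)) \<in> E" for n using fE[OF wV[of n]] wS by simp
  have scy: "simple_cycle E vs" unfolding simple_cycle_def
  proof (intro conjI allI impI)
    show "vs \<noteq> []" using p0 lvs by auto
    show "distinct vs" unfolding distinct_conv_nth lvs
    proof (intro allI impI)
      fix i j assume "i < p" "j < p" "i \<noteq> j"
      moreover have "M+i < N" "M+j < N" using \<open>i<p\<close> \<open>j<p\<close> p_def by auto
      ultimately show "vs!i \<noteq> vs!j" using dist_w[of "M+i" "M+j"] unfolding vs_def by auto
    qed
    fix j assume j: "j < length vs"
    show "(vs!j, vs!((j+1) mod length vs)) \<in> E"
    proof (cases "Suc j < p")
      case True then show ?thesis using edge_w[of "M+j"] j lvs unfolding vs_def by auto
    next
      case False
      then have "Suc j = p" using j lvs by auto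
      then have "vs!((j+1) mod length vs) = w (M + Suc j)" using lvs MN p_def unfolding vs_def by auto
      then show ?thesis using edge_w[of "M+j"] j lvs unfolding vs_def by auto
    qed
  qed
  then have pk: "p \<le> k" using noc lvs by auto
  define L where "L = lay (w M)"
  have Lk: "L < k" using fstep[OF wV[of M]] L_def by auto
  have wlay: "lay (w (M+j)) = (L + j) mod k" for j
  proof (induction j)
    case 0 then show ?case using Lk L_def by simp
  next
    case (Suc j)
    have "lay (w (M + Suc j)) = Suc (lay (w (M+j))) mod k" using flay[OF wV[of "M+j"]] wS by simp
    also have "\<dots> = (L + Suc j) mod k" using Suc by (simp add: mod_Suc_eq)
    finally show ?case .
  qed
  have "w (M+p) = w M" using MN p_def by auto
  then have "(L + p) mod k = L" using wlay[of p] wlay[of 0] Lk by simp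
  then have pk': "p = k" using pk p0 mod_ne[OF Lk, of p] by linarith
  define g where "g j = w (M + j mod k)" for j
  have gS: "g (Suc j) = f (g j)" for j
  proof (cases "Suc (j mod k) < k")
    case True
    then have "Suc j mod k = Suc (j mod k)" by (simp add: mod_Suc)
    then show ?thesis unfolding g_def using wS by simp
  next
    case False
    have "j mod k < k" using k2 by simp
    then have jm1: "Suc (j mod k) = k" using False by linarith
    then have jm: "j mod k = k - 1" "Suc j mod k = 0" by (auto simp: mod_Suc)
    have "g (Suc j) = w M" unfolding g_def using jm by simp
    also have "\<dots> = w (M + p)" using \<open>w (M+p) = w M\<close> by simp
    also have "\<dots> = f (w (M + (k - 1)))" using pk' k2 wS[of "M + (k-1)"] by (simp add: Suc_diff_1)
    finally show ?thesis unfolding g_def using jm by simp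
  qed
  have gV: "g j \<in> V" for j unfolding g_def using wV by simp
  have glay: "lay (g j) = (L + j) mod k" for j unfolding g_def using wlay by (simp add: mod_add_right_eq)
  have gmod: "g x = g y" if "x mod k = y mod k" for x y unfolding g_def using that by simp
  define as where "as = map (\<lambda>i. g (i + (k - L))) [0..<k]"
  have "as \<in> Cf k r" unfolding Cf_def
  proof (intro CollectI conjI allI impI)
    show "length as = k" unfolding as_def by simp
    fix i assume i: "i < k"
    have a1: "as!i = g (i + (k-L))" unfolding as_def using i by simp
    have "Suc i mod k < k" using k2 by simp
    then have "as!((i+1) mod k) = g ((i+1) mod k + (k-L))" unfolding as_def by simp
    also have "\<dots> = g (Suc (i + (k-L)))" by (rule gmod) (simp add: mod_add_left_eq)
    also have "\<dots> = f (g (i + (k-L)))" by (rule gS)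
    finally have a2: "as!((i+1) mod k) = f (as!i)" using a1 by simp
    have "lay (g (i + (k-L))) = (L + (i + (k-L))) mod k" by (rule glay)
    also have "\<dots> = i" using Lk i by (simp add: add.commute)
    finally have "lay (as!i) = i" using a1 by simp
    then show "(as!i, as!((i+1) mod k)) \<in> r i" using a2 fstep[OF gV] a1 by metis
  qed
  then show ?thesis by auto
qed

end



theorem lemma4p3:
  fixes k :: nat and I :: "nat \<Rightarrow> ('a \<times> 'a) set" and CT :: "nat set"
  assumes "k \<ge> 2"
    and "\<forall>i<k. finite (I i)"
    and "\<forall>i\<in>CT. i < k \<longrightarrow> key_cons (I i)"
    and "distinct_positions k I"
    and "purified k I"
    and "strongly_connected (inst_vertices k I) (inst_edges k I)"
  shows "((\<exists>vs. simple_cycle (inst_edges k I) vs \<and> length vs > k) \<longrightarrow>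
            MC k I = {{}} \<and> \<not> entails k I)
       \<and> ((\<not> (\<exists>vs. simple_cycle (inst_edges k I) vs \<and> length vs > k)) \<longrightarrow>
            MC k I = {{t} | t. t \<in> Cf k I})"
proof -
  interpret ck k I using assms by unfold_locales auto
  show ?thesis
  proof (rule conjI; rule impI)
    assume "\<exists>vs. simple_cycle (inst_edges k I) vs \<and> length vs > k"
    then obtain vs where scy: "simple_cycle (inst_edges k I) vs" and len: "length vs > k" by blast
    define r0 where "r0 = rf (cyc_f vs)"
    have R0: "repair k I r0" unfolding r0_def by (rule rf_repair[OF cyc_f_E[OF scy]])
    have C0: "Cf k r0 = {}" unfolding r0_def by (rule long_empty[OF scy len])
    have F0: "frugal k I r0" unfolding frugal_def using R0 C0 by auto
    have "MC k I = {{}}"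
    proof
      show "{{}} \<subseteq> MC k I" unfolding MC_def using F0 C0 by auto
      show "MC k I \<subseteq> {{}}"
      proof
        fix X assume "X \<in> MC k I"
        then obtain r where X: "X = Cf k r" "frugal k I r" unfolding MC_def by auto
        show "X \<in> {{}}"
        proof (rule ccontr)
          assume "X \<notin> {{}}"
          then have "Cf k r0 \<subset> Cf k r" using C0 X by auto
          then have "\<exists>r'. repair k I r' \<and> Cf k r' \<subset> Cf k r" using R0 by blast
          then show False using X(2) unfolding frugal_def by blast
        qed
      qed
    qed
    moreover have "\<not> entails k I" unfolding entails_def using R0 C0 by blast
    ultimately show "MC k I = {{}} \<and> \<not> entails k I" by blast
  next
    assume noc: "\<not> (\<exists>vs. simple_cycle (inst_edges k I) vs \<and> length vs > k)"
    have Rt: "repair k I (rf (cyc_f t))" if "t \<in> Cf k I" for t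
      by (rule rf_repair[OF cyc_f_E[OF t_cycle[OF that]]])
    have Ft: "frugal k I (rf (cyc_f t))" if tC: "t \<in> Cf k I" for t
      unfolding frugal_def
    proof (intro conjI notI)
      show "repair k I (rf (cyc_f t))" using Rt[OF tC] .
      assume "\<exists>r'. repair k I r' \<and> Cf k r' \<subset> Cf k (rf (cyc_f t))"
      then obtain r' where "repair k I r'" "Cf k r' \<subset> {t}" using t_single[OF tC] by auto
      then show False using nonempty_Cf[OF noc] by blast
    qed
    show "MC k I = {{t} | t. t \<in> Cf k I}"
    proof
      show "{{t} | t. t \<in> Cf k I} \<subseteq> MC k I"
      proof
        fix X assume "X \<in> {{t} | t. t \<in> Cf k I}"
        then obtain t where "X = {t}" "t \<in> Cf k I" by auto
        then have "X = Cf k (rf (cyc_f t))" "frugal k I (rf (cyc_f t))" using Ft t_single by auto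
        then show "X \<in> MC k I" unfolding MC_def by blast
      qed
      show "MC k I \<subseteq> {{t} | t. t \<in> Cf k I}"
      proof
        fix X assume "X \<in> MC k I"
        then obtain r where X: "X = Cf k r" "frugal k I r" unfolding MC_def by auto
        have R: "repair k I r" using X(2) unfolding frugal_def by auto
        obtain t where t: "t \<in> Cf k r" using nonempty_Cf[OF noc R] by auto
        have tI: "t \<in> Cf k I" using Cf_mono[OF R] t by auto
        have "\<not> Cf k (rf (cyc_f t)) \<subset> Cf k r"
        proof
          assume "Cf k (rf (cyc_f t)) \<subset> Cf k r"
          then have "\<exists>r'. repair k I r' \<and> Cf k r' \<subset> Cf k r" using Rt[OF tI] by blast
          then show False using X(2) unfolding frugal_def by blast
        qed
        then have "Cf k r = {t}" using t_single[OF tI] t by auto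
        then show "X \<in> {{t} | t. t \<in> Cf k I}" using X tI by auto
      qed
    qed
  qed
qed


end
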